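(* Let $k\ge2$ and $n\in\mathbb{Z}$ with $\mathcal{F}_{n,k}(x)$ not identically zero. Then $$\mathcal{F}_{n,k}(x)=x^{r_{n,k}}\,(x^k+1)^{\rho_{n,k}}\,Q_{n,k}(x^k)$$ for a polynomial $Q_{n,k}(y)\in\mathbb{Z}[y]$ such that $Q_{n,k}(y)$ is not divisible by $y+1$ and $Q_{n,k}(0)\neq0$. Moreover, if $k$ is odd, then $x=-1$ is a root of $\mathcal{F}_{n,k}$ of multiplicity exactly $\rho_{n,k}$.
   Context: For $k\ge2$, the polynomials $\mathcal{F}_{n,k}(x)\in\mathbb{Z}[x]$ ($n\in\mathbb{Z}$) are defined by $\mathcal{F}_{1,k}=1$, $\mathcal{F}_{n,k}=0$ for $n=0,-1,\dots,-(k-2)$, and $\mathcal{F}_{n,k}(x)=\sum_{j=1}^{k}x^{k-j}\mathcal{F}_{n-j,k}(x)$ for all $n\in\mathbb{Z}$. This recurrence is used upwards for $n\ge2$, and downwards for $n\le-(k-1)$ as $\mathcal{F}_{n,k}=\mathcal{F}_{n+k,k}-\sum_{j=1}^{k-1}x^j\mathcal{F}_{n+j,k}$. The quantity $r_{n,k}\in\{0,\dots,k-1\}$ is defined as the residue of $(k-1)(n-1)$ modulo $k$ if $n>0$, and as the residue of $|n|+1$ modulo $k$ if $n\le0$. $\rho_{n,k}$ is defined as follows: let $a\in\{0,\dots,k\}$ be the residue of $n-2$ modulo $k+1$, and let $\rho_{n,k}\in\{0,\dots,k-1\}$ be the residue of $a$ modulo $k$. For $n\le0$ this equals $((k|n|-2)\bmod(k+1))\bmod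 k$. *)

theory Defs
  imports "HOL-Computational_Algebra.Polynomial"
begin

function Fpoly :: "nat \<Rightarrow> int \<Rightarrow> int poly" where
  "Fpoly k n =
    (if k < 2 then 0
     else if n = 1 then 1
     else if 2 - int k \<le> n \<and> n \<le> 0 then 0
     else if n \<ge> 2 then (\<Sum>j = 1..k. monom 1 (k - j) * Fpoly k (n - int j))
     else Fpoly k (n + int k) - (\<Sum>j = 1..k - 1. monom 1 j * Fpoly k (n + int j)))"
  by pat_completeness auto
termination
proof (relation "measure (\<lambda>(k, n). if 2 - int k \<le> n \<and> n \<le> 1 then 0
                                    else if n \<ge> 2 then nat n else nat (- n))")
  show "wf (measure (\<lambda>(k, n). if 2 - int k \<le> n \<and> n \<le> 1 then 0
                                    else if n \<ge> 2 then nat n else nat (- n)))" by simp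
qed auto

definition rr :: "nat \<Rightarrow> int \<Rightarrow> nat" where
  "rr k n = (if n > 0 then nat (((int k - 1) * (n - 1)) mod int k)
             else nat ((\<bar>n\<bar> + 1) mod int k))"

definition rho :: "nat \<Rightarrow> int \<Rightarrow> nat" where
  "rho k n = nat (((n - 2) mod (int k + 1)) mod int k)"

end

theory Submission
  imports Defs
begin


lemma Fpoly_one: "k \<ge> 2 \<Longrightarrow> Fpoly k 1 = 1"
  by (subst Fpoly.simps) simp

lemma Fpoly_zero: "k \<ge> 2 \<Longrightarrow> 2 - int k \<le> n \<Longrightarrow> n \<le> 0 \<Longrightarrow> Fpoly k n = 0"
  by (subst Fpoly.simps) simp

lemma Fpoly_up: "k \<ge> 2 \<Longrightarrow> n \<ge> 2 \<Longrightarrow> Fpoly k n = (\<Sum>j = 1..k. monom 1 (k - j) * Fpoly k (n - int j))"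
  by (subst Fpoly.simps) simp

lemma Fpoly_down: "k \<ge> 2 \<Longrightarrow> n \<le> 1 - int k \<Longrightarrow>
   Fpoly k n = Fpoly k (n + int k) - (\<Sum>j = 1..k - 1. monom 1 j * Fpoly k (n + int j))"
  by (subst Fpoly.simps) simp

declare Fpoly.simps[simp del]

lemma pcompose_monom1: "pcompose (monom 1 m) q = q ^ m"
  by (induction m) (auto simp: monom_Suc pcompose_pCons pcompose_1)

function Ap :: "nat \<Rightarrow> int \<Rightarrow> int poly" where
  "Ap k m = (if m < 0 then 0 else if m = 0 then 1
             else monom 1 1 * (\<Sum>p = 1..k. Ap k (m - int p)))"
  by pat_completeness auto
termination
  by (relation "measure (\<lambda>(k, m). nat (m + 1))") auto

function Ep :: "nat \<Rightarrow> int \<Rightarrow> int poly" where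
  "Ep k m = (if k = 0 \<or> m < 0 then 0 else if m = 0 then 1
             else monom 1 (k - 1) * Ep k (m - int k) - (\<Sum>p = 1..k - 1. monom 1 p * Ep k (m - int p)))"
  by pat_completeness auto
termination
  by (relation "measure (\<lambda>(k, m). nat (m + 1))") auto

lemma Ap_neg: "m < 0 \<Longrightarrow> Ap k m = 0" by simp
lemma Ap_0[simp]: "Ap k 0 = 1" by simp
lemma Ap_pos: "m > 0 \<Longrightarrow> Ap k m = monom 1 1 * (\<Sum>p = 1..k. Ap k (m - int p))"
  by (subst Ap.simps) simp
declare Ap.simps[simp del]

lemma Ep_neg: "m < 0 \<Longrightarrow> Ep k m = 0" by simp
lemma Ep_0[simp]: "k > 0 \<Longrightarrow> Ep k 0 = 1" by simp
lemma Ep_pos: "k > 0 \<Longrightarrow> m > 0 \<Longrightarrow> Ep k m = monom 1 (k - 1) * Ep k (m - int k) - (\<Sum>p = 1..k - 1. monom 1 p * Ep k (m - int p))"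
  by (subst Ep.simps) simp
declare Ep.simps[simp del]

lemma monom_mult1: "monom (1::'a::comm_semiring_1) a * monom 1 b = monom 1 (a + b)"
  by (simp add: mult_monom)

lemma A_link:
  assumes k: "k \<ge> 2"
  shows "monom 1 N * Fpoly k (int N + 1) = pcompose (Ap k (int N)) (monom 1 k)"
proof (induction N rule: less_induct)
  case (less N)
  show ?case
  proof (cases "N = 0")
    case True
    then show ?thesis using k by (simp add: Fpoly_one pcompose_1)
  next
    case False
    have "monom 1 N * Fpoly k (int N + 1) = (\<Sum>j = 1..k. monom 1 N * (monom 1 (k - j) * Fpoly k (int N + 1 - int j)))"
      using k False by (simp add: Fpoly_up sum_distrib_left)
    also have "\<dots> = (\<Sum>j = 1..k. monom 1 k * pcompose (Ap k (int N - int j)) (monom 1 k))"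
    proof (rule sum.cong[OF refl])
      fix j assume j: "j \<in> {1..k}"
      show "monom 1 N * (monom 1 (k - j) * Fpoly k (int N + 1 - int j)) = monom 1 k * pcompose (Ap k (int N - int j)) (monom 1 k)"
      proof (cases "j \<le> N")
        case True
        have e1: "int N + 1 - int j = int (N - j) + 1" using True by simp
        have e2: "monom 1 N * monom (1::int) (k - j) = monom 1 k * monom 1 (N - j)"
          using True j by (simp add: monom_mult1 add.commute)
        have "monom 1 N * (monom 1 (k - j) * Fpoly k (int N + 1 - int j)) = monom 1 k * (monom 1 (N - j) * Fpoly k (int (N - j) + 1))"
          unfolding e1 mult.assoc[symmetric] e2 by (simp only: mult.assoc)
        also have "\<dots> = monom 1 k * pcompose (Ap k (int (N - j))) (monom 1 k)"
          using less[of "N - j"] True j False by simp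
        finally show ?thesis using True by (simp add: of_nat_diff)
      next
        case False
        have "Fpoly k (int N + 1 - int j) = 0" using False j k \<open>N \<noteq> 0\<close> by (intro Fpoly_zero) auto
        then show ?thesis using False by (simp add: Ap_neg)
      qed
    qed
    also have "\<dots> = pcompose (Ap k (int N)) (monom 1 k)"
      using False by (simp add: Ap_pos pcompose_mult pcompose_monom1 pcompose_sum sum_distrib_left)
    finally show ?thesis .
  qed
qed

lemma monom_pow_k: "(monom (1::int) k) ^ j = monom 1 (k * j)"
  by (simp add: monom_power)

lemma E_link:
  assumes k: "k \<ge> 2"
  shows "monom 1 ((k - 1) * M) * Fpoly k (- (int M + int k - 1)) = pcompose (Ep k (int M)) (monom 1 k)"
proof (induction M rule: less_induct)
  case (less M)
  show ?case
  proof (cases "M = 0")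
    case True
    have "(\<Sum>j = 1..k - 1. monom 1 j * Fpoly k (1 - int k + int j)) = 0"
      using k by (intro sum.neutral ballI) (subst Fpoly_zero, auto)
    then have "Fpoly k (1 - int k) = 1"
      using k by (simp add: Fpoly_down Fpoly_one)
    then show ?thesis using True k by (simp add: pcompose_1)
  next
    case M0: False
    have n: "- (int M + int k - 1) \<le> 1 - int k" using M0 by simp
    have "monom 1 ((k - 1) * M) * Fpoly k (- (int M + int k - 1)) =
      monom 1 ((k - 1) * M) * Fpoly k (1 - int M) -
      (\<Sum>j = 1..k - 1. monom 1 ((k - 1) * M) * (monom 1 j * Fpoly k (- (int M + int k - 1) + int j)))"
      by (subst Fpoly_down[OF k n]) (simp add: sum_distrib_left right_diff_distrib)
    also have "monom 1 ((k - 1) * M) * Fpoly k (1 - int M) = monom 1 (k * (k - 1)) * pcompose (Ep k (int M - int k)) (monom 1 k)"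
    proof (cases "k \<le> M")
      case True
      have e1: "1 - int M = - (int (M - k) + int k - 1)" using True by simp
      have ar: "(k - 1) * M = k * (k - 1) + (k - 1) * (M - k)"
      proof -
        obtain t where t: "M = k + t" using True by (metis le_add_diff_inverse)
        obtain a where a: "k = Suc a" using k by (cases k) auto
        show ?thesis unfolding t a by (simp add: algebra_simps)
      qed
      have e2: "monom 1 ((k - 1) * M) = monom (1::int) (k * (k - 1)) * monom 1 ((k - 1) * (M - k))"
        unfolding monom_mult1 ar[symmetric] ..
      have IH: "monom 1 ((k - 1) * (M - k)) * Fpoly k (- (int (M - k) + int k - 1)) = pcompose (Ep k (int (M - k))) (monom 1 k)"
        using less[of "M - k"] M0 k by simp
      have e3: "int (M - k) = int M - int k" using True by simp
      show ?thesis unfolding e2 mult.assoc e1 IH by (simp only: e3)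
    next
      case False
      have "Fpoly k (1 - int M) = 0" using False M0 by (intro Fpoly_zero k) auto
      then show ?thesis using False by (simp add: Ep_neg)
    qed
    also have "(\<Sum>j = 1..k - 1. monom 1 ((k - 1) * M) * (monom 1 j * Fpoly k (- (int M + int k - 1) + int j)))
       = (\<Sum>j = 1..k - 1. monom 1 (k * j) * pcompose (Ep k (int M - int j)) (monom 1 k))"
    proof (rule sum.cong[OF refl])
      fix j assume j: "j \<in> {1..k - 1}"
      show "monom 1 ((k - 1) * M) * (monom 1 j * Fpoly k (- (int M + int k - 1) + int j)) = monom 1 (k * j) * pcompose (Ep k (int M - int j)) (monom 1 k)"
      proof (cases "j \<le> M")
        case True
        have e1: "- (int M + int k - 1) + int j = - (int (M - j) + int k - 1)" using True by simp
        have e2: "monom 1 ((k - 1) * M) * monom (1::int) j = monom 1 (k * j) * monom 1 ((k - 1) * (M - j))"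
        proof -
          have "(k - 1) * M + j = k * j + (k - 1) * (M - j)"
          proof -
            obtain t where t: "M = j + t" using True by (metis le_add_diff_inverse)
            obtain a where a: "k = Suc a" using k by (cases k) auto
            show ?thesis unfolding t a by (simp add: algebra_simps)
          qed
          then show ?thesis by (simp add: monom_mult1)
        qed
        have "monom 1 ((k - 1) * M) * (monom 1 j * Fpoly k (- (int M + int k - 1) + int j))
           = monom 1 (k * j) * (monom 1 ((k - 1) * (M - j)) * Fpoly k (- (int (M - j) + int k - 1)))"
          unfolding e1 mult.assoc[symmetric] e2 by (simp only: mult.assoc)
        also have "\<dots> = monom 1 (k * j) * pcompose (Ep k (int (M - j))) (monom 1 k)"
          using less[of "M - j"] True j M0 by simp
        finally show ?thesis using True by (simp add: of_nat_diff)
      next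
        case False
        have "Fpoly k (- (int M + int k - 1) + int j) = 0" using False j k by (intro Fpoly_zero) auto
        then show ?thesis using False by (simp add: Ep_neg)
      qed
    qed
    also have "monom 1 (k * (k - 1)) * pcompose (Ep k (int M - int k)) (monom 1 k) -
        (\<Sum>j = 1..k - 1. monom 1 (k * j) * pcompose (Ep k (int M - int j)) (monom 1 k))
        = pcompose (Ep k (int M)) (monom 1 k)"
      using M0 k by (simp add: Ep_pos pcompose_mult pcompose_diff pcompose_monom1 pcompose_sum monom_pow_k)
    finally show ?thesis .
  qed
qed

lemma shift_sum1:
  fixes f :: "int \<Rightarrow> 'a::comm_monoid_add"
  shows "(\<Sum>p = 1..k. f (m - int p)) + f (m - 1 - int k) = (\<Sum>p = 1..k. f (m - 1 - int p)) + f (m - 1)"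
proof (induction k)
  case 0
  then show ?case by simp
next
  case (Suc k)
  have "(\<Sum>p = 1..Suc k. f (m - int p)) + f (m - 1 - int (Suc k)) = ((\<Sum>p = 1..k. f (m - int p)) + f (m - 1 - int k)) + f (m - 1 - int (Suc k))"
    by (simp add: add_ac algebra_simps)
  also have "\<dots> = (\<Sum>p = 1..k. f (m - 1 - int p)) + f (m - 1) + f (m - 1 - int (Suc k))" using Suc by simp
  also have "\<dots> = (\<Sum>p = 1..Suc k. f (m - 1 - int p)) + f (m - 1)" by (simp add: add_ac)
  finally show ?case .
qed

lemma shift_sum2:
  fixes g :: "nat \<Rightarrow> 'a::comm_ring_1"
  shows "(\<Sum>p<k. c ^ p * g p) = g 0 - c ^ k * g k + c * (\<Sum>p<k. c ^ p * g (Suc p))"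
  by (induction k) (simp_all add: algebra_simps)

lemma Ap_rec:
  assumes "m \<ge> 2"
  shows "Ap k m = [:1, 1:] * Ap k (m - 1) - monom 1 1 * Ap k (m - 1 - int k)"
proof -
  have s: "(\<Sum>p = 1..k. Ap k (m - int p)) + Ap k (m - 1 - int k) = (\<Sum>p = 1..k. Ap k (m - 1 - int p)) + Ap k (m - 1)"
    by (rule shift_sum1)
  have a1: "Ap k m = monom 1 1 * (\<Sum>p = 1..k. Ap k (m - int p))" using assms by (simp add: Ap_pos)
  have a2: "Ap k (m - 1) = monom 1 1 * (\<Sum>p = 1..k. Ap k (m - 1 - int p))" using assms by (simp add: Ap_pos)
  have "Ap k m + monom 1 1 * Ap k (m - 1 - int k) = Ap k (m - 1) + monom 1 1 * Ap k (m - 1)"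
    unfolding a1 using arg_cong[OF s, of "\<lambda>x. monom 1 1 * x"] a2 by (simp add: algebra_simps)
  moreover have "[:1, 1:] = 1 + (monom 1 1 :: int poly)" by (simp add: monom_Suc one_pCons)
  ultimately show ?thesis by (simp add: algebra_simps)
qed

lemma Ep_rec:
  assumes k: "k \<ge> 2" and m: "m \<ge> 2"
  shows "Ep k m = monom 1 (k - 1) * [:1, 1:] * Ep k (m - int k) - monom 1 k * Ep k (m - 1 - int k)"
proof -
  define y :: "int poly" where "y = monom 1 1"
  have ym: "monom 1 p = y ^ p" for p by (simp add: y_def monom_power)
  have T: "(\<Sum>p<k. y ^ p * Ep k (m' - int p)) = y ^ (k - 1) * Ep k (m' - int k)" if "m' > 0" for m'
  proof -
    have "(\<Sum>p<k. y ^ p * Ep k (m' - int p)) = Ep k m' + (\<Sum>p = 1..k - 1. y ^ p * Ep k (m' - int p))"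
    proof -
      have "{..<k} = insert 0 {1..k - 1}" using k by auto
      then show ?thesis by simp
    qed
    then show ?thesis using that k by (simp add: Ep_pos ym)
  qed
  have sh: "(\<Sum>p<k. y ^ p * Ep k (m - int p)) = Ep k m - y ^ k * Ep k (m - int k) + y * (\<Sum>p<k. y ^ p * Ep k (m - 1 - int p))"
    using shift_sum2[of y "\<lambda>p. Ep k (m - int p)" k] by (simp add: algebra_simps)
  have "Ep k m = y ^ (k - 1) * Ep k (m - int k) + y ^ k * Ep k (m - int k) - y * (y ^ (k - 1) * Ep k (m - 1 - int k))"
    using sh T[of m] T[of "m - 1"] m by (simp add: algebra_simps)
  moreover have "[:1, 1:] = 1 + y" by (simp add: y_def monom_Suc one_pCons)
  moreover obtain a where a: "k = Suc a" using k by (cases k) auto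
  ultimately show ?thesis by (simp add: algebra_simps ym)
qed

lemma divmod_uniq:
  fixes q j q' j' d :: int
  assumes "q * d + j = q' * d + j'" "0 \<le> j" "j < d" "0 \<le> j'" "j' < d"
  shows "q = q' \<and> j = j'"
proof -
  have d: "d > 0" using assms by simp
  have h1: "(q * d + j) div d = q" "(q * d + j) mod d = j" using assms(2-5) d by simp_all
  have h2: "(q' * d + j') div d = q'" "(q' * d + j') mod d = j'" using assms(2-5) d by simp_all
  have "(q * d + j) div d = (q' * d + j') div d" "(q * d + j) mod d = (q' * d + j') mod d"
    using assms(1) by (rule arg_cong)+
  then show ?thesis using h1 h2 by simp
qed

definition rA :: "int \<Rightarrow> nat" where "rA j = (if j < 2 then 0 else nat j - 1)"
definition lA :: "int \<Rightarrow> int \<Rightarrow> int" where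
  "lA q j = (if j = 0 then 1 else if j = 1 then -1 else - int (nat (q + j - 1) choose (nat j - 1)))"

lemma Ap_1: "k \<ge> 1 \<Longrightarrow> Ap k 1 = monom 1 1"
proof -
  assume k: "k \<ge> 1"
  have "{1..k} = insert 1 {2..k}" using k by auto
  then have "(\<Sum>p = 1..k. Ap k (1 - int p)) = 1" by (simp add: Ap_neg)
  then show ?thesis by (simp add: Ap_pos)
qed

lemma A_val:
  assumes k: "k \<ge> 2"
  shows "N \<ge> 1 - int k \<Longrightarrow> N = q * (int k + 1) + j \<Longrightarrow> 0 \<le> j \<Longrightarrow> j < int k + 1 \<Longrightarrow>
    \<exists>B. Ap k N = [:1, 1:] ^ rA j * B \<and> poly B (-1) = lA q j"
proof (induction "nat (N + int k)" arbitrary: N q j rule: less_induct)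
  case less
  note N = less.prems
  define u :: "int poly" where "u = [:1, 1:]"
  define y :: "int poly" where "y = monom 1 1"
  have uy: "poly u (-1) = 0" "poly y (-1) = -1" by (simp_all add: u_def y_def poly_monom)
  show ?case
  proof (cases "N < 0")
    case True
    have "N = (-1) * (int k + 1) + (N + int k + 1)" by simp
    from divmod_uniq[OF this[unfolded N(2)]] N True
    have qj: "q = -1" "j = N + int k + 1" by auto
    then have "j \<ge> 2" using N by simp
    then have "lA q j = 0" using qj by (simp add: lA_def)
    then show ?thesis using True by (intro exI[of _ 0]) (simp add: Ap_neg)
  next
    case False
    show ?thesis
    proof (cases "N \<le> 1")
      case True
      then have "N = 0 * (int k + 1) + N" by simp
      from divmod_uniq[OF this[unfolded N(2)]] N True False
      have qj: "q = 0" "j = N" using k by auto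
      show ?thesis
      proof (cases "N = 0")
        case True
        then show ?thesis using qj by (intro exI[of _ 1]) (simp add: rA_def lA_def)
      next
        case False
        then have "N = 1" using \<open>N \<le> 1\<close> \<open>\<not> N < 0\<close> by simp
        then show ?thesis using qj k by (intro exI[of _ "monom 1 1"]) (simp add: rA_def lA_def Ap_1 poly_monom)
      qed
    next
      case False
      then have N2: "N \<ge> 2" by simp
      have rec: "Ap k N = u * Ap k (N - 1) - y * Ap k (N - 1 - int k)"
        using Ap_rec[OF N2] by (simp add: u_def y_def)
      have IH: "\<exists>B. Ap k N' = u ^ rA j' * B \<and> poly B (-1) = lA q' j'"
        if "N' < N" "N' \<ge> 1 - int k" "N' = q' * (int k + 1) + j'" "0 \<le> j'" "j' < int k + 1" for N' q' j'
        using less.hyps[of N' q' j'] that unfolding u_def by simp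
      consider (j0) "j = 0" | (j1) "j = 1" | (j2) "j \<ge> 2" using N by linarith
      then show ?thesis
      proof cases
        case j0
        then have q1: "q \<ge> 1" using N N2
          by (smt (verit, best) mult_nonpos_nonneg of_nat_0_le_iff)
        have qk: "q * (int k + 1) \<ge> int k + 1" using q1 by simp
        have "\<exists>B. Ap k (N - 1) = u ^ rA (int k) * B \<and> poly B (-1) = lA (q - 1) (int k)"
          by (rule IH) (use N j0 qk k in \<open>auto simp: algebra_simps\<close>)
        then obtain B1 where B1: "Ap k (N - 1) = u ^ (k - 1) * B1" using k by (auto simp: rA_def)
        have "\<exists>B. Ap k (N - 1 - int k) = u ^ rA 0 * B \<and> poly B (-1) = lA (q - 1) 0"
          by (rule IH) (use N j0 qk k in \<open>auto simp: algebra_simps\<close>)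
        then obtain B2 where B2: "Ap k (N - 1 - int k) = B2" "poly B2 (-1) = 1" by (auto simp: rA_def lA_def)
        have "u * u ^ (k - 1) = u ^ k" using k by (metis Suc_diff_1 le_trans one_le_numeral not_one_le_zero not_gr0 power_Suc)
        then have "Ap k N = u ^ 0 * (u ^ k * B1 - y * B2)" using rec B1 B2 by (simp add: mult.assoc[symmetric])
        moreover have "poly (u ^ k * B1 - y * B2) (-1) = 1" using uy B2 k by simp
        ultimately show ?thesis using j0 by (intro exI[of _ "u ^ k * B1 - y * B2"]) (simp add: rA_def lA_def u_def)
      next
        case j1
        then have q1: "q \<ge> 1" using N N2
          by (smt (verit, best) mult_nonpos_nonneg of_nat_0_le_iff)
        have qk: "q * (int k + 1) \<ge> int k + 1" using q1 by simp
        have "\<exists>B. Ap k (N - 1) = u ^ rA 0 * B \<and> poly B (-1) = lA q 0"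
          by (rule IH) (use N j1 qk k in \<open>auto simp: algebra_simps\<close>)
        then obtain B1 where B1: "Ap k (N - 1) = B1" by (auto simp: rA_def)
        have "\<exists>B. Ap k (N - 1 - int k) = u ^ rA 1 * B \<and> poly B (-1) = lA (q - 1) 1"
          by (rule IH) (use N j1 qk k in \<open>auto simp: algebra_simps\<close>)
        then obtain B2 where B2: "Ap k (N - 1 - int k) = B2" "poly B2 (-1) = -1" by (auto simp: rA_def lA_def)
        have "Ap k N = u ^ 0 * (u * B1 - y * B2)" using rec B1 B2 by simp
        moreover have "poly (u * B1 - y * B2) (-1) = -1" using uy B2 k by simp
        ultimately show ?thesis using j1 by (intro exI[of _ "u * B1 - y * B2"]) (simp add: rA_def lA_def u_def)
      next
        case j2
        have q0: "q \<ge> 0"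
        proof (rule ccontr)
          assume "\<not> q \<ge> 0"
          then have "q * (int k + 1) \<le> (-1) * (int k + 1)" by (intro mult_right_mono) auto
          then show False using N N2 by (smt (verit))
        qed
        obtain a where a: "nat (q + j - 2) = a" by blast
        obtain i where i: "nat j - 2 = i" by blast
        have ji: "nat j - 1 = Suc i" "rA j = Suc i" "rA (j - 1) = i" using j2 i by (auto simp: rA_def)
        have na: "nat (q + j - 1) = Suc a" using a q0 j2 by simp
        have "\<exists>B. Ap k (N - 1) = u ^ rA (j - 1) * B \<and> poly B (-1) = lA q (j - 1)"
          by (rule IH) (use N j2 k N2 q0 in \<open>auto simp: algebra_simps\<close>)
        moreover have "lA q (j - 1) = - int (a choose i)"
        proof (cases "j = 2")
          case True
          then show ?thesis using i by (simp add: lA_def)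
        next
          case False
          have "nat (j - 1) - 1 = i" using i j2 by linarith
          moreover have "nat (q + (j - 1) - 1) = a" using a by (simp add: algebra_simps)
          ultimately show ?thesis using False j2 by (simp add: lA_def)
        qed
        ultimately obtain B1 where B1: "Ap k (N - 1) = u ^ i * B1" "poly B1 (-1) = - int (a choose i)"
          using ji by auto
        have "\<exists>B. Ap k (N - 1 - int k) = u ^ rA j * B \<and> poly B (-1) = lA (q - 1) j"
          by (rule IH) (use N j2 k N2 in \<open>auto simp: algebra_simps\<close>)
        moreover have "lA (q - 1) j = - int (a choose Suc i)"
          using j2 a ji by (simp add: lA_def algebra_simps)
        ultimately obtain B2 where B2: "Ap k (N - 1 - int k) = u ^ Suc i * B2" "poly B2 (-1) = - int (a choose Suc i)"
          using ji by auto
        have "Ap k N = u ^ Suc i * (B1 - y * B2)" using rec B1 B2 by (simp add: algebra_simps)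
        moreover have "poly (B1 - y * B2) (-1) = - int (Suc a choose Suc i)"
          using B1 B2 uy by simp
        ultimately show ?thesis using ji na j2 by (intro exI[of _ "B1 - y * B2"]) (simp add: lA_def u_def)
      qed
    qed
  qed
qed

definition rE :: "nat \<Rightarrow> int \<Rightarrow> nat" where "rE k j = (if j < 2 then 0 else nat (int k + 1 - j))"
definition lE :: "nat \<Rightarrow> int \<Rightarrow> int \<Rightarrow> int" where
  "lE k q j = (if j < 2 then (-1) ^ ((k - 1) * nat q)
     else (-1) ^ ((k - 1) * nat (q + 1)) * int (nat (q + 1) choose nat (int k + 1 - j)))"

lemma Ep_1: "k \<ge> 2 \<Longrightarrow> Ep k 1 = - monom 1 1"
proof -
  assume k: "k \<ge> 2"
  have "{1..k - 1} = insert 1 {2..k - 1}" using k by auto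
  then have "(\<Sum>p = 1..k - 1. monom 1 p * Ep k (1 - int p)) = monom 1 1" using k by (simp add: Ep_neg)
  then show ?thesis using k by (simp add: Ep_pos Ep_neg)
qed

lemma E_val:
  assumes k: "k \<ge> 2"
  shows "M \<ge> 1 - int k \<Longrightarrow> M = q * (int k + 1) + j \<Longrightarrow> 0 \<le> j \<Longrightarrow> j < int k + 1 \<Longrightarrow>
    \<exists>B. Ep k M = [:1, 1:] ^ rE k j * B \<and> poly B (-1) = lE k q j"
proof (induction "nat (M + int k)" arbitrary: M q j rule: less_induct)
  case less
  note N = less.prems
  define u :: "int poly" where "u = [:1, 1:]"
  define y :: "int poly" where "y = monom 1 1"
  obtain c where c: "k = Suc c" using k by (cases k) auto
  have uy: "poly u (-1) = 0" "poly y (-1) = -1" by (simp_all add: u_def y_def poly_monom)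
  show ?case
  proof (cases "M < 0")
    case True
    have "M = (-1) * (int k + 1) + (M + int k + 1)" by simp
    from divmod_uniq[OF this[unfolded N(2)]] N True
    have qj: "q = -1" "j = M + int k + 1" by auto
    then have "j \<ge> 2" "nat (int k + 1 - j) > 0" using N True by auto
    then have "lE k q j = 0" using qj by (simp add: lE_def)
    then show ?thesis using True by (intro exI[of _ 0]) (simp add: Ep_neg)
  next
    case False
    show ?thesis
    proof (cases "M \<le> 1")
      case True
      then have "M = 0 * (int k + 1) + M" by simp
      from divmod_uniq[OF this[unfolded N(2)]] N True False
      have qj: "q = 0" "j = M" using k by auto
      show ?thesis
      proof (cases "M = 0")
        case True
        then show ?thesis using qj k by (intro exI[of _ 1]) (simp add: rE_def lE_def)
      next
        case False
        then have "M = 1" using \<open>M \<le> 1\<close> \<open>\<not> M < 0\<close> by simp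
        then show ?thesis using qj k by (intro exI[of _ "- monom 1 1"]) (simp add: rE_def lE_def Ep_1 poly_monom)
      qed
    next
      case False
      then have N2: "M \<ge> 2" by simp
      have rec: "Ep k M = y ^ (k - 1) * u * Ep k (M - int k) - y ^ k * Ep k (M - 1 - int k)"
        using Ep_rec[OF k N2] by (simp add: u_def y_def monom_power)
      have IH: "\<exists>B. Ep k N' = u ^ rE k j' * B \<and> poly B (-1) = lE k q' j'"
        if "N' < M" "N' \<ge> 1 - int k" "N' = q' * (int k + 1) + j'" "0 \<le> j'" "j' < int k + 1" for N' q' j'
        using less.hyps[of N' q' j'] that unfolding u_def by simp
      have q0: "q \<ge> 0"
      proof (rule ccontr)
        assume "\<not> q \<ge> 0"
        then have "q * (int k + 1) \<le> (-1) * (int k + 1)" by (intro mult_right_mono) auto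
        then show False using N N2 by (smt (verit))
      qed
      have sg: "poly (y ^ (k - 1)) (-1) = (-1) ^ (k - 1)" "poly (y ^ k) (-1) = (-1) ^ k" using uy by simp_all
      consider (j0) "j = 0" | (j1) "j = 1" | (j2) "j \<ge> 2" using N by linarith
      then show ?thesis
      proof cases
        case j0
        then have q1: "q \<ge> 1" using N N2 q0 by (cases "q = 0") auto
        have qk: "q * (int k + 1) \<ge> int k + 1" using q1 by simp
        have "\<exists>B. Ep k (M - int k) = u ^ rE k 1 * B \<and> poly B (-1) = lE k (q - 1) 1"
          by (rule IH) (use N j0 qk k in \<open>auto simp: algebra_simps\<close>)
        then obtain B1 where B1: "Ep k (M - int k) = B1" by (auto simp: rE_def)
        have "\<exists>B. Ep k (M - 1 - int k) = u ^ rE k 0 * B \<and> poly B (-1) = lE k (q - 1) 0"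
          by (rule IH) (use N j0 qk k in \<open>auto simp: algebra_simps\<close>)
        then obtain B2 where B2: "Ep k (M - 1 - int k) = B2" "poly B2 (-1) = (-1) ^ ((k - 1) * nat (q - 1))"
          by (auto simp: rE_def lE_def)
        have nq: "nat q = Suc (nat (q - 1))" using q1 by simp
        have "Ep k M = u ^ 0 * (y ^ (k - 1) * u * B1 - y ^ k * B2)" using rec B1 B2 by simp
        moreover have "poly (y ^ (k - 1) * u * B1 - y ^ k * B2) (-1) = lE k q j"
          using uy B2 j0 nq unfolding lE_def c by (simp add: power_add)
        ultimately show ?thesis using j0 by (intro exI[of _ "y ^ (k - 1) * u * B1 - y ^ k * B2"]) (simp add: rE_def u_def)
      next
        case j1
        then have q1: "q \<ge> 1" using N N2 q0 by (cases "q = 0") auto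
        have qk: "q * (int k + 1) \<ge> int k + 1" using q1 by simp
        have "\<exists>B. Ep k (M - int k) = u ^ rE k 2 * B \<and> poly B (-1) = lE k (q - 1) 2"
          by (rule IH) (use N j1 qk k in \<open>auto simp: algebra_simps\<close>)
        moreover have "nat (int k + 1 - 2) = k - 1" using k by simp
        ultimately obtain B1 where B1: "Ep k (M - int k) = u ^ (k - 1) * B1" by (auto simp: rE_def)
        have "\<exists>B. Ep k (M - 1 - int k) = u ^ rE k 1 * B \<and> poly B (-1) = lE k (q - 1) 1"
          by (rule IH) (use N j1 qk k in \<open>auto simp: algebra_simps\<close>)
        then obtain B2 where B2: "Ep k (M - 1 - int k) = B2" "poly B2 (-1) = (-1) ^ ((k - 1) * nat (q - 1))"
          by (auto simp: rE_def lE_def)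
        have nq: "nat q = Suc (nat (q - 1))" using q1 by simp
        have "Ep k M = u ^ 0 * (y ^ (k - 1) * u * (u ^ (k - 1) * B1) - y ^ k * B2)" using rec B1 B2 by simp
        moreover have "poly (y ^ (k - 1) * u * (u ^ (k - 1) * B1) - y ^ k * B2) (-1) = lE k q j"
          using uy B2 j1 nq unfolding lE_def c by (simp add: power_add)
        ultimately show ?thesis using j1 by (intro exI[of _ "y ^ (k - 1) * u * (u ^ (k - 1) * B1) - y ^ k * B2"]) (simp add: rE_def u_def)
      next
        case j2
        obtain i where i: "nat (int k - j) = i" by blast
        have ri: "rE k j = Suc i" using i j2 N by (simp add: rE_def)
        have "\<exists>B. Ep k (M - int k) = u ^ i * B \<and> poly B (-1) = (-1) ^ ((k - 1) * nat q) * int (nat q choose i)"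
        proof (cases "j = int k")
          case True
          have "\<exists>B. Ep k (M - int k) = u ^ rE k 0 * B \<and> poly B (-1) = lE k q 0"
            by (rule IH) (use N j2 k True N2 in \<open>auto simp: algebra_simps\<close>)
          then show ?thesis using True i by (simp add: rE_def lE_def)
        next
          case False
          have "\<exists>B. Ep k (M - int k) = u ^ rE k (j + 1) * B \<and> poly B (-1) = lE k (q - 1) (j + 1)"
            by (rule IH) (use N j2 k False N2 q0 in \<open>auto simp: algebra_simps\<close>)
          moreover have "rE k (j + 1) = i" using i j2 by (simp add: rE_def)
          moreover have "lE k (q - 1) (j + 1) = (-1) ^ ((k - 1) * nat q) * int (nat q choose i)"
            using i j2 by (simp add: lE_def algebra_simps)
          ultimately show ?thesis by simp
        qed
        then obtain B1 where B1: "Ep k (M - int k) = u ^ i * B1" "poly B1 (-1) = (-1) ^ ((k - 1) * nat q) * int (nat q choose i)"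
          by blast
        have "\<exists>B. Ep k (M - 1 - int k) = u ^ rE k j * B \<and> poly B (-1) = lE k (q - 1) j"
          by (rule IH) (use N j2 k N2 q0 in \<open>auto simp: algebra_simps\<close>)
        moreover have "lE k (q - 1) j = (-1) ^ ((k - 1) * nat q) * int (nat q choose Suc i)"
        proof -
          have nk: "nat (int k + 1 - j) = Suc i" using i j2 N by simp
          show ?thesis using j2 by (simp add: lE_def nk)
        qed
        ultimately obtain B2 where B2: "Ep k (M - 1 - int k) = u ^ Suc i * B2" "poly B2 (-1) = (-1) ^ ((k - 1) * nat q) * int (nat q choose Suc i)"
          using ri by auto
        have "Ep k M = u ^ Suc i * (y ^ (k - 1) * B1 - y ^ k * B2)" using rec B1 B2 by (simp add: algebra_simps)
        moreover have "poly (y ^ (k - 1) * B1 - y ^ k * B2) (-1) = lE k q j"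
        proof -
          have nq: "nat (q + 1) = Suc (nat q)" using q0 by simp
          have nk: "nat (int k + 1 - j) = Suc i" using i j2 N by simp
          have L: "poly (y ^ (k - 1) * B1 - y ^ k * B2) (-1) = (-1) ^ (k - 1) * poly B1 (-1) - (-1) ^ k * poly B2 (-1)"
            using uy by simp
          have pk: "(-1::int) ^ k = - ((-1) ^ (k - 1))" using c by simp
          have R: "lE k q j = (-1) ^ (k - 1) * ((-1) ^ ((k - 1) * nat q) * int (Suc (nat q) choose Suc i))"
            using j2 by (simp add: lE_def nq nk power_add)
          show ?thesis unfolding L R pk using B1(2) B2(2) by (simp add: algebra_simps)
        qed
        ultimately show ?thesis using ri by (intro exI[of _ "y ^ (k - 1) * B1 - y ^ k * B2"]) (simp add: u_def)
      qed
    qed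
  qed
qed

lemma Ap_sum_nat: "(\<Sum>p = 1..k. Ap k (int N - int p)) = (\<Sum>p = 1..k. if p \<le> N then Ap k (int (N - p)) else 0)"
  by (intro sum.cong refl) (auto simp: Ap_neg of_nat_diff)

lemma coeff_y_mult: "coeff (monom 1 (Suc 0) * (p :: int poly)) m = (if m = 0 then 0 else coeff p (m - 1))"
  by (simp add: coeff_monom_mult)

lemma A_vanish: "k * m < N \<Longrightarrow> coeff (Ap k (int N)) m = 0"
proof (induction N arbitrary: m rule: less_induct)
  case (less N)
  have N0: "N > 0" using less.prems by simp
  show ?case
  proof (cases "m = 0")
    case True
    then show ?thesis using N0 by (simp add: Ap_pos coeff_y_mult)
  next
    case False
    have "coeff (Ap k (int N - int p)) (m - 1) = 0" if p: "p \<in> {1..k}" for p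
    proof (cases "p \<le> N")
      case True
      obtain m' where m': "m = Suc m'" using False by (cases m) auto
      have "k * (m - 1) < N - p" using less.prems p True unfolding m' by simp arith
      then show ?thesis using less.IH[of "N - p"] True p by (simp add: of_nat_diff)
    next
      case False
      then show ?thesis by (simp add: Ap_neg)
    qed
    then show ?thesis using N0 False by (simp add: Ap_pos coeff_y_mult coeff_sum)
  qed
qed

lemma A_nonneg: "coeff (Ap k (int N)) m \<ge> 0"
proof (induction N arbitrary: m rule: less_induct)
  case (less N)
  show ?case
  proof (cases "N = 0")
    case True
    then show ?thesis by (simp add: coeff_1)
  next
    case False
    have "\<forall>p\<in>{1..k}. coeff (Ap k (int N - int p)) (m - 1) \<ge> 0"
    proof
      fix p assume p: "p \<in> {1..k}"
      show "coeff (Ap k (int N - int p)) (m - 1) \<ge> 0"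
      proof (cases "p \<le> N")
        case True
        then show ?thesis using less.IH[of "N - p"] p by (simp add: of_nat_diff)
      next
        case False
        then show ?thesis by (simp add: Ap_neg)
      qed
    qed
    then have "0 \<le> (\<Sum>p = 1..k. coeff (Ap k (int N - int p)) (m - 1))" by (intro sum_nonneg) auto
    then show ?thesis using False by (simp add: Ap_pos coeff_y_mult coeff_sum)
  qed
qed

lemma A_pos: "k \<ge> 1 \<Longrightarrow> N \<le> k * m \<Longrightarrow> k * m < N + k \<Longrightarrow> coeff (Ap k (int N)) m > 0"
proof (induction N arbitrary: m rule: less_induct)
  case (less N)
  show ?case
  proof (cases "N = 0")
    case True
    then have "m = 0" using less.prems by (cases m) auto
    then show ?thesis using True by simp
  next
    case False
    then obtain m' where m': "m = Suc m'" using less.prems by (cases m) auto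
    define p0 where "p0 = min k N"
    have p0: "p0 \<in> {1..k}" "p0 \<le> N" using False less.prems by (auto simp: p0_def)
    have "N - p0 \<le> k * m' \<and> k * m' < N - p0 + k"
    proof (cases "k \<le> N")
      case True
      then show ?thesis using less.prems unfolding m' p0_def by simp
    next
      case False
      have "m' = 0"
      proof (rule ccontr)
        assume "m' \<noteq> 0"
        then have "k \<le> k * m'" by simp
        moreover have "k * m = k + k * m'" by (simp add: m')
        ultimately show False using less.prems False by linarith
      qed
      then show ?thesis using False less.prems unfolding p0_def by simp
    qed
    then have "N - p0 \<le> k * m'" "k * m' < N - p0 + k" by auto
    then have "coeff (Ap k (int (N - p0))) m' > 0" using less.IH[of "N - p0"] p0 less.prems by simp
    then have pos: "coeff (Ap k (int N - int p0)) (m - 1) > 0" using p0 m' by (simp add: of_nat_diff)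
    have nn: "\<forall>p\<in>{1..k}. coeff (Ap k (int N - int p)) (m - 1) \<ge> 0"
    proof
      fix p assume "p \<in> {1..k}"
      show "coeff (Ap k (int N - int p)) (m - 1) \<ge> 0"
      proof (cases "p \<le> N")
        case True
        then show ?thesis using A_nonneg[of k "N - p"] by (simp add: of_nat_diff)
      qed (simp add: Ap_neg)
    qed
    have "(\<Sum>p = 1..k. coeff (Ap k (int N - int p)) (m - 1)) > 0"
      by (rule sum_pos2[where f="\<lambda>p. coeff (Ap k (int N - int p)) (m - 1)", OF _ p0(1) pos]) (use nn in auto)
    then show ?thesis using False m' by (simp add: Ap_pos coeff_y_mult coeff_sum)
  qed
qed

lemma E_vanish:
  assumes k: "k \<ge> 2"
  shows "k * i < (k - 1) * M \<Longrightarrow> coeff (Ep k (int M)) i = 0"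
proof (induction M arbitrary: i rule: less_induct)
  case (less M)
  obtain c where c: "k = Suc c" using k by (cases k) auto
  have M0: "M > 0" using less.prems by (cases M) auto
  have t1: "coeff (monom 1 (k - 1) * Ep k (int M - int k)) i = 0"
  proof (cases "k \<le> M \<and> k - 1 \<le> i")
    case True
    obtain i' where i': "i = c + i'" using True c by (metis add_diff_inverse_nat diff_Suc_1 not_less)
    obtain M' where M': "M = k + M'" using True by (metis le_add_diff_inverse)
    have "k * i' < (k - 1) * M'" using less.prems unfolding i' M' c by (simp add: algebra_simps)
    then have "coeff (Ep k (int M')) i' = 0" using less.IH[of M'] M' k by simp
    then show ?thesis using M' i' c by (simp add: coeff_monom_mult)
  next
    case False
    then show ?thesis by (auto simp: coeff_monom_mult Ep_neg)
  qed
  have t2: "coeff (monom 1 p * Ep k (int M - int p)) i = 0" if p: "p \<in> {1..k - 1}" for p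
  proof (cases "p \<le> M \<and> p \<le> i")
    case True
    obtain i' where i': "i = p + i'" using True by (metis le_add_diff_inverse)
    obtain M' where M': "M = p + M'" using True by (metis le_add_diff_inverse)
    have "k * i' < (k - 1) * M'" using less.prems unfolding i' M' c by (simp add: algebra_simps)
    then have "coeff (Ep k (int M')) i' = 0" using less.IH[of M'] M' p by simp
    then show ?thesis using M' i' by (simp add: coeff_monom_mult)
  next
    case False
    then show ?thesis by (auto simp: coeff_monom_mult Ep_neg)
  qed
  show ?case using M0 k t1 t2 by (simp add: Ep_pos coeff_sum)
qed

lemma E_degree:
  assumes k: "k \<ge> 2"
  shows "degree (Ep k (int M)) \<le> M"
proof (induction M rule: less_induct)
  case (less M)
  show ?case
  proof (cases "M = 0")
    case True
    then show ?thesis using k by simp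
  next
    case False
    have d1: "degree (monom 1 (k - 1) * Ep k (int M - int k)) \<le> M"
    proof (cases "k \<le> M")
      case True
      have "degree (Ep k (int (M - k))) \<le> M - k" using less.IH[of "M - k"] True False k by simp
      then have "degree (monom (1::int) (k - 1) * Ep k (int (M - k))) \<le> (k - 1) + (M - k)"
        by (intro order.trans[OF degree_mult_le]) (simp add: degree_monom_eq)
      then show ?thesis using True k by (simp add: of_nat_diff)
    next
      case False
      then show ?thesis by (simp add: Ep_neg)
    qed
    have d2: "degree (monom 1 p * Ep k (int M - int p)) \<le> M" if p: "p \<in> {1..k - 1}" for p
    proof (cases "p \<le> M")
      case True
      have "degree (Ep k (int (M - p))) \<le> M - p" using less.IH[of "M - p"] True p by simp
      then have "degree (monom (1::int) p * Ep k (int (M - p))) \<le> p + (M - p)"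
        by (intro order.trans[OF degree_mult_le]) (simp add: degree_monom_eq)
      then show ?thesis using True by (simp add: of_nat_diff)
    next
      case False
      then show ?thesis by (simp add: Ep_neg)
    qed
    have "degree (\<Sum>p = 1..k - 1. monom 1 p * Ep k (int M - int p)) \<le> M"
      by (rule degree_sum_le) (use d2 in auto)
    then show ?thesis using False k d1 by (simp add: Ep_pos degree_diff_le)
  qed
qed

lemma alt_choose: "(\<Sum>i\<le>R. (-1::int) ^ i * int (Suc D choose i)) = (-1) ^ R * int (D choose R)"
proof (induction R)
  case 0
  then show ?case by simp
next
  case (Suc R)
  have "(\<Sum>i\<le>Suc R. (-1::int) ^ i * int (Suc D choose i)) = (-1) ^ R * int (D choose R) + (-1) ^ Suc R * int (Suc D choose Suc R)"
    using Suc by simp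
  also have "\<dots> = (-1) ^ Suc R * int (D choose Suc R)" by (simp add: algebra_simps)
  finally show ?case .
qed

lemma E_low:
  assumes k: "k \<ge> 2"
  shows "M = k * D + R \<Longrightarrow> R < k \<Longrightarrow> coeff (Ep k (int M)) ((k - 1) * D + R) = (-1) ^ R * int (Suc D choose R)"
proof (induction M arbitrary: D R rule: less_induct)
  case (less M)
  obtain c where c: "k = Suc c" using k by (cases k) auto
  show ?case
  proof (cases "M = 0")
    case True
    then show ?thesis using less.prems k by simp
  next
    case M0: False
    define i0 where "i0 = (k - 1) * D + R"
    have t1: "coeff (monom 1 (k - 1) * Ep k (int M - int k)) i0 = (-1) ^ R * int (D choose R)"
    proof (cases "D = 0")
      case True
      then have "R > 0" using M0 less.prems by simp
      then show ?thesis using True less.prems by (simp add: Ep_neg)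
    next
      case False
      then obtain D' where D': "D = Suc D'" by (cases D) auto
      have e: "int M - int k = int (k * D' + R)" "i0 = (k - 1) + ((k - 1) * D' + R)"
        using less.prems unfolding D' i0_def c by (simp_all add: algebra_simps)
      have "coeff (Ep k (int (k * D' + R))) ((k - 1) * D' + R) = (-1) ^ R * int (Suc D' choose R)"
        using less.IH[of "k * D' + R" D' R] less.prems D' k by simp
      then show ?thesis unfolding e by (simp add: coeff_monom_mult D')
    qed
    have t2: "coeff (monom 1 p * Ep k (int M - int p)) i0 = (if p \<le> R then (-1) ^ (R - p) * int (Suc D choose (R - p)) else 0)"
      if p: "p \<in> {1..k - 1}" for p
    proof (cases "p \<le> R")
      case True
      have e1: "int M - int p = int (k * D + (R - p))" using less.prems(1) True by simp
      have e2: "i0 = p + ((k - 1) * D + (R - p))" unfolding i0_def using True by simp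
      note e = e1 e2
      have "coeff (Ep k (int (k * D + (R - p)))) ((k - 1) * D + (R - p)) = (-1) ^ (R - p) * int (Suc D choose (R - p))"
        using less.IH[of "k * D + (R - p)" D "R - p"] less.prems True p by simp
      then show ?thesis unfolding e using True by (simp add: coeff_monom_mult)
    next
      case False
      show ?thesis
      proof (cases "p \<le> M \<and> p \<le> i0")
        case True
        obtain a where a: "i0 = p + a" using True by (metis le_add_diff_inverse)
        obtain b where b: "M = p + b" using True by (metis le_add_diff_inverse)
        have ab: "b = a + D" using a b less.prems unfolding i0_def c by simp
        have "a < c * D" using a False unfolding i0_def c by simp
        then have "k * a < (k - 1) * b" unfolding ab c by (simp add: algebra_simps)
        then have "coeff (Ep k (int b)) a = 0" by (rule E_vanish[OF k])
        then show ?thesis using False a b by (simp add: coeff_monom_mult)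
      next
        case False
        then show ?thesis using \<open>\<not> p \<le> R\<close> by (auto simp: coeff_monom_mult Ep_neg)
      qed
    qed
    have "(\<Sum>p = 1..k - 1. coeff (monom 1 p * Ep k (int M - int p)) i0)
        = (\<Sum>p = 1..k - 1. (if p \<le> R then (-1) ^ (R - p) * int (Suc D choose (R - p)) else 0))"
      using t2 by (intro sum.cong) auto
    also have "\<dots> = (\<Sum>p = 1..R. (-1) ^ (R - p) * int (Suc D choose (R - p)))"
    proof -
      have e: "{1..k - 1} \<inter> {p. p \<le> R} = {1..R}" using less.prems by auto
      show ?thesis
        using sum.inter_restrict[of "{1..k - 1}" "\<lambda>p. (-1::int) ^ (R - p) * int (Suc D choose (R - p))" "{p. p \<le> R}"]
        unfolding e by simp
    qed
    also have "\<dots> = (\<Sum>i<R. (-1) ^ i * int (Suc D choose i))"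
      using sum.atLeastLessThan_rev_at_least_Suc_atMost[of "\<lambda>i. (-1::int) ^ i * int (Suc D choose i)" 0 R]
      by (simp add: atLeast0LessThan)
    finally have s: "(\<Sum>p = 1..k - 1. coeff (monom 1 p * Ep k (int M - int p)) i0) = (\<Sum>i<R. (-1) ^ i * int (Suc D choose i))" .
    have "coeff (Ep k (int M)) i0 = (-1) ^ R * int (D choose R) - (\<Sum>i<R. (-1) ^ i * int (Suc D choose i))"
      using M0 k t1 s by (simp add: Ep_pos coeff_sum)
    also have "\<dots> = (-1) ^ R * int (Suc D choose R)"
      using alt_choose[where R=R and D=D] by (simp add: lessThan_Suc_atMost[symmetric])
    finally show ?thesis unfolding i0_def .
  qed
qed



lemma pcompose_power: "pcompose (p ^ n) q = (pcompose p q) ^ n"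
  by (induction n) (simp_all add: pcompose_mult pcompose_1)

lemma deg_orders:
  fixes P :: "int poly"
  assumes "P \<noteq> 0" "a \<noteq> b"
  shows "order a P + order b P \<le> degree P"
proof -
  obtain P1 where P1: "P = [:-a, 1:] ^ order a P * P1" "\<not> [:-a, 1:] dvd P1"
    using order_decomp[OF assms(1)] by blast
  have P1n: "P1 \<noteq> 0" using P1 assms by auto
  have "order b ([:-a, 1:] ^ order a P) = 0"
    using assms(2) by (intro order_0I) simp
  then have "order b P = order b P1"
    using P1 assms order_mult[of "[:-a, 1:] ^ order a P" P1 b] by simp
  also have "\<dots> \<le> degree P1" using order_degree[OF P1n] .
  finally have "order b P \<le> degree P1" .
  moreover have "degree P = order a P + degree P1"
    using P1 P1n by (metis degree_mult_eq degree_linear_power mult_eq_0_iff assms(1))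
  ultimately show ?thesis by simp
qed

lemma order_xk1:
  assumes "odd k"
  shows "order (-1) (monom (1::int) k + 1) = 1"
proof -
  have k: "k \<ge> 1" using assms by (cases k) auto
  have ne: "monom (1::int) k + 1 \<noteq> 0"
  proof
    assume "monom (1::int) k + 1 = 0"
    then have "coeff (monom (1::int) k + 1) k = 0" by simp
    then show False using k by (simp add: coeff_monom)
  qed
  have p: "poly (monom (1::int) k + 1) (-1) = 0" using assms by (simp add: poly_monom)
  have "pderiv (monom (1::int) k + 1) = monom (of_nat k) (k - 1)" by (simp add: pderiv_monom pderiv_add)
  then have "poly (pderiv (monom (1::int) k + 1)) (-1) \<noteq> 0" using k by (simp add: poly_monom)
  then have "order (-1) (pderiv (monom (1::int) k + 1)) = 0" by (rule order_0I)
  then show ?thesis using order_pderiv[OF ne p] by simp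
qed

lemma assemble:
  fixes F P B :: "int poly" and k a m r \<rho> :: nat
  assumes k: "k \<ge> 1"
    and link: "monom 1 a * F = pcompose P (monom 1 k)"
    and ar: "k * m = a + r"
    and van: "\<forall>i<m. coeff P i = 0"
    and val: "P = [:1, 1:] ^ \<rho> * B" and Bn: "poly B (-1) \<noteq> 0"
    and low: "coeff P m \<noteq> 0"
  shows "(\<exists>Q. F = monom 1 r * (monom 1 k + 1) ^ \<rho> * pcompose Q (monom 1 k)
            \<and> \<not> [:1, 1:] dvd Q \<and> poly Q 0 \<noteq> 0) \<and> (odd k \<longrightarrow> order (-1) F = \<rho>)"
proof -
  define u :: "int poly" where "u = [:1, 1:]"
  have Pn: "P \<noteq> 0" using low by auto
  have "monom 1 m dvd P" using van by (simp add: monom_1_dvd_iff')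
  then obtain G where G: "P = monom 1 m * G" by (elim dvdE)
  have Gn: "G \<noteq> 0" using G Pn by auto
  have ou: "order (-1) (u ^ \<rho>) = \<rho>" using order_power_n_n[of "-1::int" \<rho>] by (simp add: u_def)
  have oP: "order (-1) P = \<rho>"
  proof -
    have "order (-1) B = 0" using Bn by (rule order_0I)
    then show ?thesis using order_mult[of "u ^ \<rho>" B "-1"] Pn val ou by (simp add: u_def)
  qed
  have "order (-1) (monom (1::int) m) = 0" by (rule order_0I) (simp add: poly_monom)
  then have oG: "order (-1) G = \<rho>" using order_mult[of "monom 1 m" G "-1"] Pn G oP by simp
  obtain Q where Q: "G = [:- (-1), 1:] ^ order (-1) G * Q" "\<not> [:- (-1), 1:] dvd Q"
    using order_decomp[OF Gn] by blast
  then have GQ: "G = u ^ \<rho> * Q" and Qd: "\<not> u dvd Q" using oG by (simp_all add: u_def)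
  have Q0: "poly Q 0 \<noteq> 0"
  proof -
    have "coeff P m = coeff G 0" using G by (simp add: coeff_monom_mult)
    also have "\<dots> = poly G 0" by (simp add: poly_0_coeff_0)
    also have "\<dots> = poly Q 0" using GQ by (simp add: u_def)
    finally show ?thesis using low by simp
  qed
  have pu: "pcompose u (monom 1 k) = monom 1 k + 1" by (simp add: u_def pcompose_pCons one_pCons)
  have "monom 1 a * F = monom 1 (k * m) * (monom 1 k + 1) ^ \<rho> * pcompose Q (monom 1 k)"
    using link G GQ pu by (simp add: pcompose_mult pcompose_monom1 monom_pow_k pcompose_power mult.assoc)
  also have "\<dots> = monom 1 a * (monom 1 r * (monom 1 k + 1) ^ \<rho> * pcompose Q (monom 1 k))"
    using ar by (simp add: monom_mult1[symmetric] mult.assoc)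
  finally have FF: "F = monom 1 r * (monom 1 k + 1) ^ \<rho> * pcompose Q (monom 1 k)" by simp
  have part2: "order (-1) F = \<rho>" if odd: "odd k"
  proof -
    have Fn: "F \<noteq> 0"
    proof
      assume "F = 0"
      then have "pcompose P (monom 1 k) = 0" using link by simp
      then show False using Pn k by (simp add: pcompose_eq_0_iff degree_monom_eq)
    qed
    have nz: "monom (1::int) k + 1 \<noteq> 0"
    proof
      assume "monom (1::int) k + 1 = 0"
      then have "coeff (monom (1::int) k + 1) k = 0" by simp
      then show False using k by (simp add: coeff_monom)
    qed
    obtain C where C: "monom (1::int) k + 1 = [:- (-1), 1:] ^ order (-1) (monom (1::int) k + 1) * C" "\<not> [:- (-1), 1:] dvd C"
      using order_decomp[OF nz] by blast
    then have C1: "monom (1::int) k + 1 = u * C" and C2: "poly C (-1) \<noteq> 0"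
      using order_xk1[OF odd] by (simp_all add: u_def poly_eq_0_iff_dvd)
    have "F = u ^ \<rho> * (monom 1 r * C ^ \<rho> * pcompose Q (monom 1 k))"
      using FF C1 by (simp add: power_mult_distrib algebra_simps)
    moreover have "poly (monom 1 r * C ^ \<rho> * pcompose Q (monom 1 k)) (-1) \<noteq> 0"
      using C2 Qd odd by (simp add: poly_monom poly_pcompose u_def poly_eq_0_iff_dvd)
    ultimately show ?thesis
      using Fn ou order_mult[of "u ^ \<rho>" "monom 1 r * C ^ \<rho> * pcompose Q (monom 1 k)" "-1"] order_0I by fastforce
  qed
  show ?thesis using FF Qd Q0 part2 by (auto simp: u_def)
qed

lemma mod_helper: "0 \<le> x \<Longrightarrow> x < d \<Longrightarrow> (q * d + x) mod d = (x::int)"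
  by (simp add: mod_mult_self3)

lemma rr_pos_ar:
  assumes k: "k \<ge> 2"
  shows "rr k (int N + 1) < k \<and> k dvd (N + rr k (int N + 1))"
proof -
  define t where "t = ((int k - 1) * int N) mod int k"
  have t: "0 \<le> t" "t < int k" using k by (simp_all add: t_def)
  have r: "rr k (int N + 1) = nat t" by (simp add: rr_def t_def)
  have "(int N + t) mod int k = (int N + (int k - 1) * int N) mod int k"
    unfolding t_def by (simp add: mod_add_right_eq)
  also have "\<dots> = (int k * int N) mod int k" by (simp add: algebra_simps)
  also have "\<dots> = 0" by simp
  finally have "int k dvd (int N + t)" by (simp add: mod_eq_0_iff_dvd)
  then have "int k dvd int (N + nat t)" using t by simp
  then show ?thesis using r t by (simp only: of_nat_dvd_iff) simp
qed

lemma rho_pos: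
  assumes k: "k \<ge> 2"
  shows "rho k (int N + 1) = rA (int N mod (int k + 1))"
proof -
  define q where "q = int N div (int k + 1)"
  define j where "j = int N mod (int k + 1)"
  have j: "0 \<le> j" "j < int k + 1" unfolding j_def using pos_mod_sign[of "int k + 1" "int N"] pos_mod_bound[of "int k + 1" "int N"] by simp_all
  have N: "int N = q * (int k + 1) + j" using div_mult_mod_eq[of "int N" "int k + 1"] by (simp add: q_def j_def)
  show ?thesis
  proof (cases "j = 0")
    case True
    have e: "int N + 1 - 2 = (q - 1) * (int k + 1) + int k" using N True by (simp add: algebra_simps)
    have "(int N + 1 - 2) mod (int k + 1) = int k" unfolding e by (rule mod_helper) auto
    then show ?thesis using True by (simp add: rho_def rA_def j_def)
  next
    case False
    have e: "int N + 1 - 2 = q * (int k + 1) + (j - 1)" using N by (simp add: algebra_simps)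
    have "(int N + 1 - 2) mod (int k + 1) = j - 1" unfolding e by (rule mod_helper) (use j False in auto)
    moreover have "(j - 1) mod int k = j - 1" using j False by simp
    ultimately show ?thesis using False j unfolding rho_def rA_def j_def[symmetric] by auto
  qed
qed

lemma rho_neg:
  assumes k: "k \<ge> 2"
  shows "rho k (- (int M + int k - 1)) = rE k (int M mod (int k + 1))"
proof -
  define q where "q = int M div (int k + 1)"
  define j where "j = int M mod (int k + 1)"
  have j: "0 \<le> j" "j < int k + 1" unfolding j_def using pos_mod_sign[of "int k + 1" "int M"] pos_mod_bound[of "int k + 1" "int M"] by simp_all
  have N: "int M = q * (int k + 1) + j" using div_mult_mod_eq[of "int M" "int k + 1"] by (simp add: q_def j_def)
  show ?thesis
  proof (cases "j = 0")
    case True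
    have "- (int M + int k - 1) - 2 = (- q - 1) * (int k + 1)" using N True by (simp add: algebra_simps)
    then have "(- (int M + int k - 1) - 2) mod (int k + 1) = 0" by simp
    then show ?thesis using True by (simp add: rho_def rE_def j_def)
  next
    case False
    have e: "- (int M + int k - 1) - 2 = (- q - 2) * (int k + 1) + (int k + 1 - j)" using N by (simp add: algebra_simps)
    have "(- (int M + int k - 1) - 2) mod (int k + 1) = int k + 1 - j" unfolding e by (rule mod_helper) (use j False in auto)
    moreover have "(int k + 1 - j) mod int k = (if j = 1 then 0 else int k + 1 - j)" using j False by auto
    ultimately show ?thesis using False j unfolding rho_def rE_def j_def[symmetric] by auto
  qed
qed

lemma rr_neg: "k \<ge> 2 \<Longrightarrow> rr k (- (int M + int k - 1)) = M mod k"
  by (simp add: rr_def nat_mod_as_int)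

lemma pos_case:
  assumes k: "k \<ge> 2"
  shows "(\<exists>Q :: int poly.
            Fpoly k (int N + 1) = monom 1 (rr k (int N + 1)) * (monom 1 k + 1) ^ rho k (int N + 1) * pcompose Q (monom 1 k)
            \<and> \<not> [:1, 1:] dvd Q \<and> poly Q 0 \<noteq> 0)
         \<and> (odd k \<longrightarrow> order (-1) (Fpoly k (int N + 1)) = rho k (int N + 1))"
proof -
  define r where "r = rr k (int N + 1)"
  have rk: "r < k" "k dvd (N + r)" using rr_pos_ar[OF k, of N] by (simp_all add: r_def)
  then obtain m where m: "N + r = k * m" by (elim dvdE)
  define q where "q = int N div (int k + 1)"
  define j where "j = int N mod (int k + 1)"
  have j: "0 \<le> j" "j < int k + 1" unfolding j_def using pos_mod_sign[of "int k + 1" "int N"] pos_mod_bound[of "int k + 1" "int N"] by simp_all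
  have q0: "q \<ge> 0" by (simp add: q_def pos_imp_zdiv_nonneg_iff)
  have Nq: "int N = q * (int k + 1) + j" using div_mult_mod_eq[of "int N" "int k + 1"] by (simp add: q_def j_def)
  obtain B where B: "Ap k (int N) = [:1, 1:] ^ rA j * B" "poly B (-1) = lA q j"
    using A_val[OF k _ Nq j(1) j(2)] k by auto
  have Bn: "poly B (-1) \<noteq> 0"
  proof -
    have "lA q j \<noteq> 0"
    proof (cases "j < 2")
      case True
      then show ?thesis using j by (auto simp: lA_def)
    next
      case False
      then have "nat j - 1 \<le> nat (q + j - 1)" using q0 by simp
      then show ?thesis using False by (simp add: lA_def)
    qed
    then show ?thesis using B by simp
  qed
  have van: "\<forall>i<m. coeff (Ap k (int N)) i = 0"
  proof (intro allI impI)
    fix i assume "i < m"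
    then have "k * i + k \<le> k * m" by (metis add.commute mult_Suc_right mult_le_mono2 Suc_leI)
    then have "k * i < N" using m rk by linarith
    then show "coeff (Ap k (int N)) i = 0" by (rule A_vanish)
  qed
  have low: "coeff (Ap k (int N)) m \<noteq> 0"
    using A_pos[of k N m] k m rk by simp
  have "(\<exists>Q. Fpoly k (int N + 1) = monom 1 r * (monom 1 k + 1) ^ rA j * pcompose Q (monom 1 k)
            \<and> \<not> [:1, 1:] dvd Q \<and> poly Q 0 \<noteq> 0) \<and> (odd k \<longrightarrow> order (-1) (Fpoly k (int N + 1)) = rA j)"
    by (rule assemble[OF _ A_link[OF k] _ van B(1) Bn low]) (use k m in auto)
  then show ?thesis using rho_pos[OF k, of N] by (simp add: r_def j_def)
qed

lemma neg_case:
  assumes k: "k \<ge> 2" and Fn: "Fpoly k (- (int M + int k - 1)) \<noteq> 0"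
  shows "(\<exists>Q :: int poly.
            Fpoly k (- (int M + int k - 1)) = monom 1 (rr k (- (int M + int k - 1))) * (monom 1 k + 1) ^ rho k (- (int M + int k - 1)) * pcompose Q (monom 1 k)
            \<and> \<not> [:1, 1:] dvd Q \<and> poly Q 0 \<noteq> 0)
         \<and> (odd k \<longrightarrow> order (-1) (Fpoly k (- (int M + int k - 1))) = rho k (- (int M + int k - 1)))"
proof -
  obtain c where c: "k = Suc c" using k by (cases k) auto
  define D where "D = M div k"
  define R where "R = M mod k"
  have MDR: "M = k * D + R" "R < k" using k by (simp_all add: D_def R_def)
  define m where "m = (k - 1) * D + R"
  have km: "k * m = (k - 1) * M + R" unfolding m_def MDR(1) c by (simp add: algebra_simps)
  define q where "q = int M div (int k + 1)"
  define j where "j = int M mod (int k + 1)"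
  have j: "0 \<le> j" "j < int k + 1" unfolding j_def using pos_mod_sign[of "int k + 1" "int M"] pos_mod_bound[of "int k + 1" "int M"] by simp_all
  have Mq: "int M = q * (int k + 1) + j" using div_mult_mod_eq[of "int M" "int k + 1"] by (simp add: q_def j_def)
  have q0: "q \<ge> 0" by (simp add: q_def pos_imp_zdiv_nonneg_iff)
  obtain B where B: "Ep k (int M) = [:1, 1:] ^ rE k j * B" "poly B (-1) = lE k q j"
    using E_val[OF k _ Mq j(1) j(2)] k by auto
  have Pn: "Ep k (int M) \<noteq> 0"
  proof
    assume "Ep k (int M) = 0"
    then have "monom 1 ((k - 1) * M) * Fpoly k (- (int M + int k - 1)) = 0" using E_link[OF k, of M] by simp
    then show False using Fn by simp
  qed
  have van: "\<forall>i<m. coeff (Ep k (int M)) i = 0"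
  proof (intro allI impI)
    fix i assume "i < m"
    then have "k * i + k \<le> k * m" by (metis add.commute mult_Suc_right mult_le_mono2 Suc_leI)
    then have "k * i < (k - 1) * M" using km MDR by linarith
    then show "coeff (Ep k (int M)) i = 0" by (rule E_vanish[OF k])
  qed
  have lowv: "coeff (Ep k (int M)) m = (-1) ^ R * int (Suc D choose R)"
    unfolding m_def by (rule E_low[OF k MDR])
  (* key: if q + j < k with j >= 2 then Ep = 0 *)
  have key: "\<not> (j \<ge> 2 \<and> q + j < int k)"
  proof
    assume a: "j \<ge> 2 \<and> q + j < int k"
    have "lE k q j = 0" using a j q0 by (simp add: lE_def)
    then have "[:1, 1:] dvd B" using B by (simp add: poly_eq_0_iff_dvd)
    then have "[:1, 1:] ^ rE k j * [:1, 1:] dvd [:1, 1:] ^ rE k j * B" by (rule mult_dvd_mono[OF dvd_refl])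
    then have "[:1, 1:] ^ Suc (rE k j) dvd Ep k (int M)" using B(1) by (simp only: power_Suc2)
    moreover have "[:1, 1:] ^ Suc (rE k j) dvd Ep k (int M) \<longleftrightarrow> Ep k (int M) = 0 \<or> Suc (rE k j) \<le> order (-1) (Ep k (int M))"
      using order_divides[of "-1::int" "Suc (rE k j)" "Ep k (int M)"] by (simp only: minus_minus)
    ultimately have o1: "Suc (rE k j) \<le> order (-1) (Ep k (int M))" using Pn by blast
    have "monom 1 m dvd Ep k (int M)" using van by (simp add: monom_1_dvd_iff')
    then have o2: "m \<le> order 0 (Ep k (int M))" using Pn monom_1_dvd_iff by blast
    have "order (-1) (Ep k (int M)) + order 0 (Ep k (int M)) \<le> degree (Ep k (int M))"
      using deg_orders[OF Pn] by simp
    then have "Suc (rE k j) + m \<le> M" using o1 o2 E_degree[OF k, of M] by linarith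
    moreover have "D = nat q"
    proof -
      have "int M = int k * q + (q + j)" using Mq by (simp add: algebra_simps)
      then have "int M div int k = q" using a q0 by simp
      then show ?thesis unfolding D_def by (simp add: zdiv_int[symmetric])
    qed
    moreover have "rE k j = nat (int k + 1 - j)" using a by (simp add: rE_def)
    ultimately show False using MDR Mq a q0 unfolding m_def c by (simp add: algebra_simps)
  qed
  have Bn: "poly B (-1) \<noteq> 0"
  proof -
    have "lE k q j \<noteq> 0"
    proof (cases "j < 2")
      case True
      then show ?thesis by (simp add: lE_def)
    next
      case False
      then have "nat (int k + 1 - j) \<le> nat (q + 1)" using key by simp
      then show ?thesis using False key by (simp add: lE_def)
    qed
    then show ?thesis using B by simp
  qed
  have low: "coeff (Ep k (int M)) m \<noteq> 0"
  proof -
    have "R \<le> Suc D"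
    proof (rule ccontr)
      assume "\<not> R \<le> Suc D"
      then have RD: "R \<ge> D + 2" by simp
      have "int M = int D * (int k + 1) + int (R - D)" using MDR RD by (simp add: algebra_simps)
      moreover have "int (R - D) < int k + 1" using MDR by simp
      ultimately have "q = int D" "j = int (R - D)" using divmod_uniq[of q "int k + 1" j "int D" "int (R - D)"] Mq j by auto
      then show False using key RD MDR by simp
    qed
    then show ?thesis using lowv by simp
  qed
  have "(\<exists>Q. Fpoly k (- (int M + int k - 1)) = monom 1 (M mod k) * (monom 1 k + 1) ^ rE k j * pcompose Q (monom 1 k)
            \<and> \<not> [:1, 1:] dvd Q \<and> poly Q 0 \<noteq> 0) \<and> (odd k \<longrightarrow> order (-1) (Fpoly k (- (int M + int k - 1))) = rE k j)"
    by (rule assemble[OF _ E_link[OF k] _ van B(1) Bn low]) (use k km R_def in auto)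
  then show ?thesis using rho_neg[OF k, of M] rr_neg[OF k, of M] by (simp add: j_def)
qed

theorem mainTheorem13:
  fixes k :: nat and n :: int
  assumes "k \<ge> 2" and "Fpoly k n \<noteq> 0"
  shows "(\<exists>Q :: int poly.
            Fpoly k n = monom 1 (rr k n) * (monom 1 k + 1) ^ rho k n * pcompose Q (monom 1 k)
            \<and> \<not> [:1, 1:] dvd Q \<and> poly Q 0 \<noteq> 0)
         \<and> (odd k \<longrightarrow> order (-1) (Fpoly k n) = rho k n)"
proof -
  consider (pos) "n \<ge> 1" | (neg) "n \<le> 1 - int k" | (zero) "2 - int k \<le> n \<and> n \<le> 0" by linarith
  then show ?thesis
  proof cases
    case pos
    then obtain N where "n = int N + 1" by (metis add.commute le_add_diff_inverse zle_iff_zadd)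
    then show ?thesis using pos_case[OF assms(1)] by simp
  next
    case neg
    define M where "M = nat (- n - int k + 1)"
    have "n = - (int M + int k - 1)" using neg by (simp add: M_def)
    then show ?thesis using neg_case[OF assms(1)] assms(2) by simp
  next
    case zero
    then show ?thesis using Fpoly_zero[OF assms(1)] assms(2) by simp
  qed
qed

end
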